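(* For $\alpha,\beta,\gamma>0$, $n\ge2$ and every $\bar\rho\in\mathcal{GS}_n$, $$\bar w(\bar\rho)=\operatorname{sgn}(\bar\rho)\sum_{\theta\in\{0,1\}^2}C_\theta\prod_{x\in\mathbb{M}_n}K_\theta(x,\bar\rho(x)),\qquad C_\theta=\tfrac12(-1)^{(\theta_1+n+1)(\theta_2+n+1)}.$$
   Context: $\mathbb{T}_n=(\mathbb{Z}/n\mathbb{Z})^2$, $e^1=(1,0)$, $e^2=(0,1)$, $e^3=\frac12(e^1+e^2)$; mid-edges $\mathbb{M}_n$ = black $\{v+\frac12e^1\}$ ⊔ white $\{v+\frac12e^2\}$, $v\in\mathbb{T}_n$, coordinates mod $n$. A generalised snake configuration is a permutation $\bar\rho$ of $\mathbb{M}_n$ with $\bar\rho(x)\in\{x,x+e^3,x+e^1\}$ ($x$ black), $\bar\rho(x)\in\{x,x+e^3,x+e^2\}$ ($x$ white); $\mathcal{GS}_n$ their set. $S(\bar\rho)$ = number of crossings (vertices $v$ with $\bar\rho(v-\frac12e^1)=v+\frac12e^1$ and $\bar\rho(v-\frac12e^2)=v+\frac12e^2$); $A,B,C$ = numbers of $x$ with $\bar\rho(x)=x+e^1$, $x+e^2$, $x+e^3$. Weight $\bar w(\bar\rho)=(-1)^{S(\bar\rho)}\alpha^{A(\bar\rho)}\beta^{B(\bar\rho)}\gamma^{C(\bar\rho)}$. For $\theta\in\{0,1\}^2$, $K_\theta:\mathbb{M}_n\times\mathbb{M}_n\to\mathbb{C}$: $K_\theta(x,x)=1$; $K_\theta(x,x+e^1)=\alpha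 e^{\pi i\theta_1/n}$ ($x$ black); $K_\theta(x,x+e^2)=\beta e^{\pi i\theta_2/n}$ ($x$ white); $K_\theta(x,x+e^3)=\gamma e^{\pi i(\theta_1+\theta_2)/(2n)}$; $0$ otherwise. *)

theory Defs
  imports "HOL-Analysis.Analysis" "HOL-Combinatorics.Permutations"
begin

text \<open>A mid-edge of the torus T_n is encoded as (b, i, j) with i, j in {0..<n}
  (coordinates mod n). If b = True it is the black mid-edge v + e1/2, otherwise
  the white mid-edge v + e2/2, where v = (i, j).\<close>

type_synonym medge = "bool \<times> nat \<times> nat"

definition Mn :: "nat \<Rightarrow> medge set" where
  "Mn n = UNIV \<times> {0..<n} \<times> {0..<n}"

definition is_black :: "medge \<Rightarrow> bool" where
  "is_black x = fst x"

fun plus_e1 :: "nat \<Rightarrow> medge \<Rightarrow> medge" where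
  "plus_e1 n (b, i, j) = (b, (i + 1) mod n, j)"

fun plus_e2 :: "nat \<Rightarrow> medge \<Rightarrow> medge" where
  "plus_e2 n (b, i, j) = (b, i, (j + 1) mod n)"

text \<open>(v + e1/2) + e3 = (v + e1) + e2/2 ; (v + e2/2) + e3 = (v + e2) + e1/2.\<close>
fun plus_e3 :: "nat \<Rightarrow> medge \<Rightarrow> medge" where
  "plus_e3 n (b, i, j) =
     (if b then (False, (i + 1) mod n, j) else (True, i, (j + 1) mod n))"

definition GS :: "nat \<Rightarrow> (medge \<Rightarrow> medge) set" where
  "GS n = {\<rho>. \<rho> permutes Mn n \<and>
     (\<forall>x \<in> Mn n. if is_black x then \<rho> x \<in> {x, plus_e3 n x, plus_e1 n x}
                                  else \<rho> x \<in> {x, plus_e3 n x, plus_e2 n x})}"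

text \<open>Crossings: vertices v with rho(v - e1/2) = v + e1/2 and rho(v - e2/2) = v + e2/2.\<close>
definition crossings :: "nat \<Rightarrow> (medge \<Rightarrow> medge) \<Rightarrow> nat" where
  "crossings n \<rho> = card {(i, j) \<in> {0..<n} \<times> {0..<n}.
      \<rho> (True, (i + n - 1) mod n, j) = (True, i, j) \<and>
      \<rho> (False, i, (j + n - 1) mod n) = (False, i, j)}"

definition cntA :: "nat \<Rightarrow> (medge \<Rightarrow> medge) \<Rightarrow> nat" where
  "cntA n \<rho> = card {x \<in> Mn n. \<rho> x = plus_e1 n x}"

definition cntB :: "nat \<Rightarrow> (medge \<Rightarrow> medge) \<Rightarrow> nat" where
  "cntB n \<rho> = card {x \<in> Mn n. \<rho> x = plus_e2 n x}"

definition cntC :: "nat \<Rightarrow> (medge \<Rightarrow> medge) \<Rightarrow> nat" where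
  "cntC n \<rho> = card {x \<in> Mn n. \<rho> x = plus_e3 n x}"

definition weight :: "real \<Rightarrow> real \<Rightarrow> real \<Rightarrow> nat \<Rightarrow> (medge \<Rightarrow> medge) \<Rightarrow> real" where
  "weight \<alpha> \<beta> \<gamma> n \<rho> = (-1) ^ crossings n \<rho> * \<alpha> ^ cntA n \<rho> * \<beta> ^ cntB n \<rho> * \<gamma> ^ cntC n \<rho>"

definition Kth :: "real \<Rightarrow> real \<Rightarrow> real \<Rightarrow> nat \<Rightarrow> nat \<times> nat \<Rightarrow> medge \<Rightarrow> medge \<Rightarrow> complex" where
  "Kth \<alpha> \<beta> \<gamma> n \<theta> x y =
     (if y = x then 1
      else if is_black x \<and> y = plus_e1 n x then
        complex_of_real \<alpha> * exp (complex_of_real pi * \<i> * of_nat (fst \<theta>) / of_nat n)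
      else if \<not> is_black x \<and> y = plus_e2 n x then
        complex_of_real \<beta> * exp (complex_of_real pi * \<i> * of_nat (snd \<theta>) / of_nat n)
      else if y = plus_e3 n x then
        complex_of_real \<gamma> * exp (complex_of_real pi * \<i> * of_nat (fst \<theta> + snd \<theta>) / (2 * of_nat n))
      else 0)"

definition Cth :: "nat \<Rightarrow> nat \<times> nat \<Rightarrow> complex" where
  "Cth n \<theta> = (1/2) * (-1) ^ ((fst \<theta> + n + 1) * (snd \<theta> + n + 1))"

end

theory Submission
  imports Defs
begin

definition invs :: "('a \<Rightarrow> nat) \<Rightarrow> 'a set \<Rightarrow> ('a \<Rightarrow> 'a) \<Rightarrow> ('a \<times> 'a) set" where
  "invs key A p = {(x,y) \<in> A \<times> A. key x < key y \<and> key (p y) < key (p x)}"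

definition prs :: "('a \<Rightarrow> nat) \<Rightarrow> 'a set \<Rightarrow> ('a \<times> 'a) set" where
  "prs key A = {(x,y) \<in> A \<times> A. key x < key y}"

definition ef :: "('a \<Rightarrow> nat) \<Rightarrow> ('a \<Rightarrow> 'a) \<Rightarrow> 'a \<times> 'a \<Rightarrow> int" where
  "ef key p z = (if (key (fst z) < key (snd z)) = (key (p (fst z)) < key (p (snd z))) then 1 else -1)"

lemma finite_prs: "finite A \<Longrightarrow> finite (prs key A)"
  unfolding prs_def by (rule finite_subset[of _ "A \<times> A"]) auto

lemma invs_prod:
  assumes "finite A" "inj_on key A" "p permutes A"
  shows "(-1::int) ^ card (invs key A p) = (\<Prod>z\<in>prs key A. ef key p z)"
proof -
  have ef: "ef key p z = (if z \<in> invs key A p then -1 else 1)" if zp: "z \<in> prs key A" for z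
  proof -
    obtain x y where z: "z = (x,y)" "x \<in> A" "y \<in> A" "key x < key y"
      using zp unfolding prs_def by (cases z) auto
    have "p x \<in> A" "p y \<in> A" using z assms(3) by (auto simp: permutes_in_image)
    moreover have "p x \<noteq> p y" using z assms(3) by (metis less_irrefl permutes_inj injD)
    ultimately have "key (p x) \<noteq> key (p y)" using assms(2) by (auto dest: inj_onD)
    then show ?thesis using z unfolding ef_def invs_def by auto
  qed
  have "(\<Prod>z\<in>prs key A. ef key p z) = (\<Prod>z\<in>prs key A. if z \<in> invs key A p then -1 else 1)"
    using ef by (rule prod.cong[OF refl])
  also have "\<dots> = (-1) ^ card (prs key A \<inter> {z. z \<in> invs key A p})"
    using finite_prs[OF assms(1)] by (simp add: prod.If_cases)
  also have "prs key A \<inter> {z. z \<in> invs key A p} = invs key A p"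
    unfolding prs_def invs_def by auto
  finally show ?thesis by simp
qed

lemma ef_comp: "ef key (p \<circ> q) (x,y) = ef key q (x,y) * ef key p (q x, q y)"
  unfolding ef_def by auto

lemma ef_sym:
  assumes "inj_on key A" "u \<in> A" "v \<in> A" "u \<noteq> v" "p u \<in> A" "p v \<in> A" "p u \<noteq> p v"
  shows "ef key p (v,u) = ef key p (u,v)"
proof -
  have "key u \<noteq> key v" "key (p u) \<noteq> key (p v)" using assms by (auto dest: inj_onD)
  then show ?thesis unfolding ef_def by auto
qed

lemma sigma_mult:
  assumes "finite A" "inj_on key A" "p permutes A" "q permutes A"
  shows "(\<Prod>z\<in>prs key A. ef key (p \<circ> q) z) = (\<Prod>z\<in>prs key A. ef key q z) * (\<Prod>z\<in>prs key A. ef key p z)"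
proof -
  define \<Phi> where "\<Phi> = (\<lambda>(x,y). if key (q x) < key (q y) then (q x, q y) else (q y, q x))"
  have qA: "q x \<in> A \<longleftrightarrow> x \<in> A" for x using assms(4) by (simp add: permutes_in_image)
  have pA: "p x \<in> A \<longleftrightarrow> x \<in> A" for x using assms(3) by (simp add: permutes_in_image)
  have qinj: "q x = q y \<longleftrightarrow> x = y" for x y using assms(4) by (meson permutes_inj injD)
  have pinj: "p x = p y \<longleftrightarrow> x = y" for x y using assms(3) by (meson permutes_inj injD)
  have kinj: "key x = key y \<longleftrightarrow> x = y" if "x \<in> A" "y \<in> A" for x y
    using assms(2) that by (auto dest: inj_onD)
  have sub: "\<Phi> ` prs key A \<subseteq> prs key A"
  proof
    fix z assume "z \<in> \<Phi> ` prs key A"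
    then obtain x y where "(x,y) \<in> prs key A" "z = \<Phi> (x,y)" by auto
    then have "x \<in> A" "y \<in> A" "x \<noteq> y" "z = \<Phi> (x,y)" unfolding prs_def by auto
    then have "q x \<in> A" "q y \<in> A" "key (q x) \<noteq> key (q y)" "z = \<Phi> (x,y)"
      using qA qinj assms(2) by (auto dest: inj_onD)
    then show "z \<in> prs key A" unfolding \<Phi>_def prs_def by (auto simp: linorder_neq_iff)
  qed
  have inj: "inj_on \<Phi> (prs key A)"
  proof (rule inj_onI)
    fix z w assume z: "z \<in> prs key A" and w: "w \<in> prs key A" and e: "\<Phi> z = \<Phi> w"
    obtain x y where xy: "z = (x,y)" "key x < key y" using z unfolding prs_def by auto
    obtain x' y' where xy': "w = (x',y')" "key x' < key y'" using w unfolding prs_def by auto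
    from e xy xy' show "z = w" unfolding \<Phi>_def
      by (cases "key (q x) < key (q y)"; cases "key (q x') < key (q y')") (simp_all add: qinj)
  qed
  have bij: "\<Phi> ` prs key A = prs key A"
    using endo_inj_surj[OF finite_prs[OF assms(1)] sub inj] .
  have "(\<Prod>z\<in>prs key A. ef key p z) = (\<Prod>z\<in>\<Phi> ` prs key A. ef key p z)" using bij by simp
  also have "\<dots> = (\<Prod>z\<in>prs key A. ef key p (\<Phi> z))"
    using prod.reindex[OF inj] by simp
  also have "\<dots> = (\<Prod>z\<in>prs key A. ef key p (q (fst z), q (snd z)))"
  proof (rule prod.cong[OF refl])
    fix z assume "z \<in> prs key A"
    then obtain x y where "z = (x,y)" "x \<in> A" "y \<in> A" "x \<noteq> y" unfolding prs_def by auto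
    moreover have "q x \<in> A" "q y \<in> A" "q x \<noteq> q y" "p (q x) \<in> A" "p (q y) \<in> A" "p (q x) \<noteq> p (q y)"
      using calculation qA pA qinj pinj by auto
    ultimately show "ef key p (\<Phi> z) = ef key p (q (fst z), q (snd z))"
      unfolding \<Phi>_def using ef_sym[OF assms(2), of "q x" "q y" p] by auto
  qed
  finally have *: "(\<Prod>z\<in>prs key A. ef key p z) = (\<Prod>z\<in>prs key A. ef key p (q (fst z), q (snd z)))" .
  have "(\<Prod>z\<in>prs key A. ef key (p \<circ> q) z) = (\<Prod>z\<in>prs key A. ef key q z * ef key p (q (fst z), q (snd z)))"
    by (rule prod.cong[OF refl]) (auto simp: ef_comp[symmetric])
  also have "\<dots> = (\<Prod>z\<in>prs key A. ef key q z) * (\<Prod>z\<in>prs key A. ef key p (q (fst z), q (snd z)))"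
    by (rule prod.distrib)
  finally show ?thesis using * by simp
qed

lemma invs_transpose_aux:
  assumes "inj_on key A" "a \<in> A" "b \<in> A" "key a < key b"
  shows "(-1::int) ^ card (invs key A (Transposition.transpose a b)) = -1"
proof -
  define Bt where "Bt = {x \<in> A. key a < key x \<and> key x < key b}"
  have kinj: "key x = key y \<longleftrightarrow> x = y" if "x \<in> A" "y \<in> A" for x y
    using assms(1) that by (auto dest: inj_onD)
  have ab: "a \<noteq> b" using assms by auto
  have eq: "invs key A (Transposition.transpose a b) = insert (a,b) ((\<lambda>x. (a,x)) ` Bt \<union> (\<lambda>x. (x,b)) ` Bt)"
  proof (rule set_eqI)
    fix z :: "'a \<times> 'a"
    obtain x y where z: "z = (x,y)" by (cases z)
    have "(x,y) \<in> invs key A (Transposition.transpose a b) \<longleftrightarrow>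
          (x = a \<and> y = b) \<or> (x = a \<and> y \<in> Bt) \<or> (y = b \<and> x \<in> Bt)"
      unfolding invs_def Bt_def
      using assms ab
      by (cases "x = a"; cases "x = b"; cases "y = a"; cases "y = b") auto
    then show "z \<in> invs key A (Transposition.transpose a b) \<longleftrightarrow>
          z \<in> insert (a,b) ((\<lambda>x. (a,x)) ` Bt \<union> (\<lambda>x. (x,b)) ` Bt)"
      using z by auto
  qed
  have fin: "finite Bt"
  proof -
    have "Bt \<subseteq> key -` {..<key b} \<inter> A" unfolding Bt_def by auto
    moreover have "finite (key -` {..<key b} \<inter> A)"
      using assms(1) by (metis finite_lessThan finite_vimage_IntI)
    ultimately show ?thesis by (rule finite_subset)
  qed
  have c1: "card ((\<lambda>x. (a,x)) ` Bt) = card Bt" by (rule card_image) (auto simp: inj_on_def)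
  have c2: "card ((\<lambda>x. (x,b)) ` Bt) = card Bt" by (rule card_image) (auto simp: inj_on_def)
  have dis: "(\<lambda>x. (a,x)) ` Bt \<inter> (\<lambda>x. (x,b)) ` Bt = {}" unfolding Bt_def by auto
  have nin: "(a,b) \<notin> (\<lambda>x. (a,x)) ` Bt \<union> (\<lambda>x. (x,b)) ` Bt" unfolding Bt_def by auto
  have "card (invs key A (Transposition.transpose a b)) = Suc (card Bt + card Bt)"
    unfolding eq using fin nin dis c1 c2 by (simp add: card_Un_disjoint)
  then show ?thesis by simp
qed

lemma invs_transpose:
  assumes "inj_on key A" "a \<in> A" "b \<in> A" "a \<noteq> b"
  shows "(-1::int) ^ card (invs key A (Transposition.transpose a b)) = -1"
proof -
  have "key a \<noteq> key b" using assms by (auto dest: inj_onD)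
  then consider "key a < key b" | "key b < key a" by linarith
  then show ?thesis
  proof cases
    case 1 show ?thesis by (rule invs_transpose_aux[OF assms(1,2,3) 1])
  next
    case 2 then show ?thesis using invs_transpose_aux[OF assms(1,3,2)]
      by (simp add: transpose_commute)
  qed
qed

lemma sign_invs:
  assumes "finite A" "inj_on key A" "p permutes A"
  shows "sign p = (-1::int) ^ card (invs key A p)"
  using assms(3,1)
proof (induction rule: permutes_induct)
  case id
  have "invs key A id = {}" "invs key A (\<lambda>x. x) = {}" unfolding invs_def by auto
  then show ?case by simp
next
  case (swap a b p)
  have pA: "p permutes A" using swap by simp
  have IH: "sign p = (-1::int) ^ card (invs key A p)" using swap assms(1) by simp
  have tA: "Transposition.transpose a b permutes A" using swap by (simp add: permutes_swap_id)
  have "(-1::int) ^ card (invs key A (Transposition.transpose a b \<circ> p))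
      = (\<Prod>z\<in>prs key A. ef key (Transposition.transpose a b \<circ> p) z)"
    by (rule invs_prod[OF assms(1,2)]) (rule permutes_compose[OF pA tA])
  also have "\<dots> = (\<Prod>z\<in>prs key A. ef key p z) * (\<Prod>z\<in>prs key A. ef key (Transposition.transpose a b) z)"
    by (rule sigma_mult[OF assms(1,2) tA pA])
  also have "\<dots> = (-1) ^ card (invs key A p) * (-1) ^ card (invs key A (Transposition.transpose a b))"
    using invs_prod[OF assms(1,2) pA] invs_prod[OF assms(1,2) tA] by simp
  also have "\<dots> = - sign p" using IH invs_transpose[OF assms(2) swap(1,2,3)] by simp
  also have "\<dots> = sign (Transposition.transpose a b \<circ> p)"
    using swap assms(1) pA
    by (simp add: sign_compose permutation_swap_id permutes_imp_permutation sign_swap_id)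
  finally show ?case by (rule sym)
qed

definition lay :: "nat \<Rightarrow> medge \<Rightarrow> nat" where
  "lay n x = (fst (snd x) + snd (snd x)) mod n"
definition pos :: "medge \<Rightarrow> nat" where
  "pos x = 2 * fst (snd x) + (if fst x then 1 else 0)"
definition key :: "nat \<Rightarrow> medge \<Rightarrow> nat" where
  "key n x = 2 * n * lay n x + pos x"

lemma Mn_iff: "(b,i,j) \<in> Mn n \<longleftrightarrow> i < n \<and> j < n"
  by (auto simp: Mn_def)

lemma modsuc: "(i::nat) < n \<Longrightarrow> (i + 1) mod n = (if i + 1 = n then 0 else i + 1)"
  by (cases "i + 1 = n") auto

lemma modsuc': "(i::nat) < n \<Longrightarrow> Suc i mod n = (if Suc i = n then 0 else Suc i)"
  by (cases "Suc i = n") auto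

lemma modpred: "(j::nat) < n \<Longrightarrow> (j + n - 1) mod n = (if j = 0 then n - 1 else j - 1)"
  by (cases j) auto

lemma mod_cancel_helper:
  fixes i j j' n :: nat
  assumes "(i + j) mod n = (i + j') mod n" "j < n" "j' < n"
  shows "j = j'"
proof (cases "j' \<le> j")
  case True
  then have le: "i + j' \<le> i + j" by simp
  obtain s where "i + j = i + j' + n * s" using mod_eq_nat1E[OF assms(1) le] by blast
  then have "j = j' + n * s" by simp
  then show ?thesis using assms(2) by (cases s) auto
next
  case False
  then have le: "i + j \<le> i + j'" by simp
  obtain s where "i + j' = i + j + n * s" using mod_eq_nat2E[OF assms(1) le] by blast
  then have "j' = j + n * s" by simp
  then show ?thesis using assms(3) by (cases s) auto
qed

locale gsl =
  fixes n :: nat and \<rho> :: "medge \<Rightarrow> medge"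
  assumes n2: "n \<ge> 2" and rGS: "\<rho> \<in> GS n"
begin

lemma perm: "\<rho> permutes Mn n"
  using rGS by (simp add: GS_def)

lemma fin: "finite (Mn n)"
  by (simp add: Mn_def)

lemma step:
  assumes "(b,i,j) \<in> Mn n"
  shows "\<rho> (b,i,j) = (b,i,j) \<or>
     (b \<and> \<rho> (b,i,j) = (True, (i+1) mod n, j)) \<or> (b \<and> \<rho> (b,i,j) = (False, (i+1) mod n, j)) \<or>
     (\<not> b \<and> \<rho> (b,i,j) = (False, i, (j+1) mod n)) \<or> (\<not> b \<and> \<rho> (b,i,j) = (True, i, (j+1) mod n))"
  using rGS assms unfolding GS_def is_black_def
  by (cases b) (auto dest!: bspec[of _ _ "(b,i,j)"])

lemma in_Mn_rho: "x \<in> Mn n \<Longrightarrow> \<rho> x \<in> Mn n"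
  using perm by (simp add: permutes_in_image)

lemma rho_inj: "\<rho> x = \<rho> y \<longleftrightarrow> x = y"
  using perm by (meson permutes_inj injD)

lemma mod1: "(i + 1) mod n \<noteq> i" if "i < n" for i
  using n2 that by (simp add: modsuc')

lemma e_ne:
  assumes "(b,i,j) \<in> Mn n"
  shows "plus_e1 n (b,i,j) \<noteq> (b,i,j)" "plus_e2 n (b,i,j) \<noteq> (b,i,j)" "plus_e3 n (b,i,j) \<noteq> (b,i,j)"
    "plus_e1 n (b,i,j) \<noteq> plus_e2 n (b,i,j)" "plus_e1 n (b,i,j) \<noteq> plus_e3 n (b,i,j)"
    "plus_e2 n (b,i,j) \<noteq> plus_e3 n (b,i,j)"
  using assms mod1 by (auto simp: Mn_iff)

definition E where "E = {x \<in> Mn n. \<rho> x \<noteq> x}"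
definition Ed where "Ed d = {x \<in> E. lay n x = d}"
definition wrap where "wrap x \<longleftrightarrow> \<rho> x \<noteq> x \<and> fst x \<and> fst (snd x) = n - 1"
definition Wr where "Wr = {x \<in> Mn n. wrap x}"
definition delta where "delta x = (if \<rho> x = plus_e1 n x then 2 else if \<rho> x = plus_e3 n x then 1 else (0::nat))"

lemma E_sub: "E \<subseteq> Mn n" by (auto simp: E_def)
lemma finE: "finite E" using E_sub fin by (rule finite_subset)

lemma permE: "\<rho> permutes E"
proof (rule bij_imp_permutes)
  show "bij_betw \<rho> E E"
  proof -
    have "\<rho> ` E = E"
    proof
      show "\<rho> ` E \<subseteq> E"
      proof
        fix y assume "y \<in> \<rho> ` E"
        then obtain x where x: "x \<in> E" "y = \<rho> x" by auto
        then have "\<rho> x \<in> Mn n" "\<rho> (\<rho> x) \<noteq> \<rho> x" using in_Mn_rho rho_inj[of "\<rho> x" x] E_def by auto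
        then show "y \<in> E" using x by (simp add: E_def)
      qed
      show "E \<subseteq> \<rho> ` E"
      proof
        fix y assume y: "y \<in> E"
        define x where "x = inv \<rho> y"
        have x: "x \<in> Mn n" "\<rho> x = y"
          using y permutes_inverses(1)[OF perm] permutes_in_image[OF permutes_inv[OF perm]]
          unfolding x_def E_def by auto
        then have "\<rho> x \<noteq> x" using y by (auto simp: E_def)
        then show "y \<in> \<rho> ` E" using x by (auto simp: E_def)
      qed
    qed
    then show ?thesis using rho_inj by (simp add: bij_betw_def inj_on_def)
  qed
  show "x \<notin> E \<Longrightarrow> \<rho> x = x" for x using perm by (auto simp: E_def permutes_not_in)
qed

lemma lay_step:
  assumes "x \<in> Mn n" "\<rho> x \<noteq> x"
  shows "lay n (\<rho> x) = (lay n x + 1) mod n"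
proof -
  obtain b i j where x: "x = (b,i,j)" by (cases x)
  show ?thesis using step[of b i j] assms unfolding x lay_def
    by (auto simp: mod_Suc_eq mod_add_left_eq mod_add_right_eq ac_simps)
qed

lemma pos_step:
  assumes "x \<in> Mn n"
  shows "pos (\<rho> x) + (if wrap x then 2 * n else 0) = pos x + delta x"
proof -
  obtain b i j where x: "x = (b,i,j)" by (cases x)
  have ij: "i < n" "j < n" using assms x by (auto simp: Mn_iff)
  have ne: "plus_e1 n x \<noteq> x" "plus_e2 n x \<noteq> x" "plus_e3 n x \<noteq> x"
    "plus_e1 n x \<noteq> plus_e2 n x" "plus_e1 n x \<noteq> plus_e3 n x" "plus_e2 n x \<noteq> plus_e3 n x"
    using e_ne assms x by auto
  have w: "wrap x \<longleftrightarrow> \<rho> x \<noteq> x \<and> b \<and> i = n - 1" unfolding wrap_def x by simp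
  consider (f) "\<rho> x = x" | (b1) "b" "\<rho> x = plus_e1 n x" | (b3) "b" "\<rho> x = plus_e3 n x"
    | (w2) "\<not> b" "\<rho> x = plus_e2 n x" | (w3) "\<not> b" "\<rho> x = plus_e3 n x"
    using step[of b i j] assms unfolding x by auto
  then show ?thesis
  proof cases
    case f then show ?thesis unfolding w delta_def using ne by simp
  next
    case b1
    have d: "delta x = 2" unfolding delta_def using b1 by simp
    show ?thesis unfolding w d using b1 ne ij n2 unfolding x pos_def
      by (cases "i + 1 = n") (auto simp: modsuc)
  next
    case b3
    have d: "delta x = 1" unfolding delta_def using b3 ne by simp
    show ?thesis unfolding w d using b3 ne ij n2 unfolding x pos_def
      by (cases "i + 1 = n") (auto simp: modsuc)
  next
    case w2
    have d: "delta x = 0" unfolding delta_def using w2 ne by simp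
    show ?thesis unfolding w d using w2 ne ij n2 unfolding x pos_def
      by auto
  next
    case w3
    have d: "delta x = 1" unfolding delta_def using w3 ne by simp
    show ?thesis unfolding w d using w3 ne ij n2 unfolding x pos_def
      by auto
  qed
qed

lemma same_layer_inj:
  assumes "x \<in> Mn n" "y \<in> Mn n" "lay n x = lay n y" "pos x = pos y"
  shows "x = y"
proof -
  obtain b i j where x: "x = (b,i,j)" by (cases x)
  obtain b' i' j' where y: "y = (b',i',j')" by (cases y)
  have "b = b'" "i = i'" using assms(4) unfolding x y pos_def by (auto split: if_splits) presburger+
  moreover have "j = j'"
  proof -
    have "(i + j) mod n = (i + j') mod n" using assms(3) \<open>i = i'\<close> unfolding x y lay_def by simp
    then show ?thesis using assms(1,2) mod_cancel_helper unfolding x y Mn_iff by blast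
  qed
  ultimately show ?thesis using x y by simp
qed

lemma pos_lt: "x \<in> Mn n \<Longrightarrow> pos x < 2 * n"
  by (cases x) (auto simp: pos_def Mn_iff)

lemma lay_lt: "lay n x < n"
  using n2 by (simp add: lay_def)

lemma lexkey:
  fixes a b c d m :: nat
  assumes "b < m" "d < m"
  shows "m * a + b < m * c + d \<longleftrightarrow> a < c \<or> (a = c \<and> b < d)"
proof -
  have A: "m * a + b < m * c + d" if "a < c"
  proof -
    have 1: "m * Suc a \<le> m * c" using that by (intro mult_le_mono2) simp
    have 2: "m * a + b < m * Suc a" using assms by simp
    from 2 1 have "m * a + b < m * c" by (rule order.strict_trans2)
    then show ?thesis by simp
  qed
  have B: "m * c + d < m * a + b" if "c < a"
  proof -
    have 1: "m * Suc c \<le> m * a" using that by (intro mult_le_mono2) simp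
    have 2: "m * c + d < m * Suc c" using assms by simp
    from 2 1 have "m * c + d < m * a" by (rule order.strict_trans2)
    then show ?thesis by simp
  qed
  show ?thesis using A B by (cases a c rule: linorder_cases) auto
qed

lemma key_less:
  assumes "x \<in> Mn n" "y \<in> Mn n"
  shows "key n x < key n y \<longleftrightarrow> lay n x < lay n y \<or> (lay n x = lay n y \<and> pos x < pos y)"
  using lexkey[of "pos x" "2 * n" "pos y" "lay n x" "lay n y"] pos_lt assms unfolding key_def by auto

lemma key_inj: "inj_on (key n) (Mn n)"
proof (rule inj_onI)
  fix x y assume xy: "x \<in> Mn n" "y \<in> Mn n" "key n x = key n y"
  then have "\<not> key n x < key n y" "\<not> key n y < key n x" by auto
  then have "lay n x = lay n y" "pos x = pos y" using key_less[OF xy(1,2)] key_less[OF xy(2,1)] by auto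
  then show "x = y" using same_layer_inj xy by auto
qed

end

lemma count_if: "finite A \<Longrightarrow> (\<Sum>x\<in>A. if P x then (1::nat) else 0) = card {x\<in>A. P x}"
  by (simp add: sum.inter_filter[symmetric])

context gsl
begin

lemma Ed_bij:
  assumes "d < n"
  shows "bij_betw \<rho> (Ed d) (Ed ((d + 1) mod n))"
proof -
  have inj: "inj_on \<rho> (Ed d)" using rho_inj by (auto simp: inj_on_def)
  have "\<rho> ` Ed d = Ed ((d + 1) mod n)"
  proof
    show "\<rho> ` Ed d \<subseteq> Ed ((d + 1) mod n)"
    proof
      fix y assume "y \<in> \<rho> ` Ed d"
      then obtain x where x: "x \<in> Ed d" "y = \<rho> x" by auto
      then have "x \<in> E" "lay n x = d" by (auto simp: Ed_def)
      then have "\<rho> x \<in> E" "lay n (\<rho> x) = (d + 1) mod n"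
        using permE lay_step permutes_in_image[OF permE] by (auto simp: E_def)
      then show "y \<in> Ed ((d + 1) mod n)" using x by (simp add: Ed_def)
    qed
    show "Ed ((d + 1) mod n) \<subseteq> \<rho> ` Ed d"
    proof
      fix y assume y: "y \<in> Ed ((d + 1) mod n)"
      define x where "x = inv \<rho> y"
      have yE: "y \<in> E" using y by (simp add: Ed_def)
      have x: "x \<in> E" "\<rho> x = y"
        using yE permutes_inverses(1)[OF permE] permutes_in_image[OF permutes_inv[OF permE]]
        unfolding x_def by auto
      have "lay n y = (lay n x + 1) mod n" using x lay_step[of x] by (simp add: E_def)
      then have "(1 + lay n x) mod n = (1 + d) mod n" using y by (simp add: Ed_def ac_simps)
      then have "lay n x = d" using mod_cancel_helper[of 1 "lay n x" n d] lay_lt assms by blast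
      then show "y \<in> \<rho> ` Ed d" using x by (auto simp: Ed_def)
    qed
  qed
  then show ?thesis using inj by (simp add: bij_betw_def)
qed

definition m where "m = card (Ed 0)"

lemma card_Ed: "d < n \<Longrightarrow> card (Ed d) = m"
proof (induction d)
  case 0 then show ?case by (simp add: m_def)
next
  case (Suc d)
  have "card (Ed d) = card (Ed ((d + 1) mod n))" using Ed_bij[of d] Suc by (simp add: bij_betw_same_card)
  then show ?case using Suc by simp
qed

lemma card_E: "card E = n * m"
proof -
  have "E = (\<Union>d\<in>{..<n}. Ed d)" using lay_lt by (auto simp: Ed_def)
  moreover have "finite (Ed d)" for d using finE by (simp add: Ed_def)
  moreover have "card (\<Union>d\<in>{..<n}. Ed d) = (\<Sum>d\<in>{..<n}. card (Ed d))"
    by (rule card_UN_disjoint) (auto simp: Ed_def finE)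
  ultimately show ?thesis using card_Ed by simp
qed

lemma rho_cases:
  assumes "x \<in> Mn n"
  obtains (f) "\<rho> x = x" | (b1) "fst x" "\<rho> x = plus_e1 n x" | (b3) "fst x" "\<rho> x = plus_e3 n x"
    | (w2) "\<not> fst x" "\<rho> x = plus_e2 n x" | (w3) "\<not> fst x" "\<rho> x = plus_e3 n x"
proof -
  obtain b i j where x: "x = (b,i,j)" by (cases x)
  show ?thesis using step[of b i j] assms that unfolding x by auto
qed

lemma ne_x:
  assumes "x \<in> Mn n"
  shows "plus_e1 n x \<noteq> x" "plus_e2 n x \<noteq> x" "plus_e3 n x \<noteq> x"
    "plus_e1 n x \<noteq> plus_e2 n x" "plus_e1 n x \<noteq> plus_e3 n x" "plus_e2 n x \<noteq> plus_e3 n x"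
  using e_ne[of "fst x" "fst (snd x)" "snd (snd x)"] assms by auto

lemma card_E_ABC: "cntA n \<rho> + cntB n \<rho> + cntC n \<rho> = card E"
proof -
  have "(\<Sum>x\<in>Mn n. if \<rho> x \<noteq> x then (1::nat) else 0) =
        (\<Sum>x\<in>Mn n. (if \<rho> x = plus_e1 n x then 1 else 0) + (if \<rho> x = plus_e2 n x then 1 else 0)
            + (if \<rho> x = plus_e3 n x then 1 else 0))"
  proof (rule sum.cong[OF refl])
    fix x assume x: "x \<in> Mn n"
    note ne = ne_x[OF x]
    show "(if \<rho> x \<noteq> x then (1::nat) else 0) = (if \<rho> x = plus_e1 n x then 1 else 0) + (if \<rho> x = plus_e2 n x then 1 else 0)
            + (if \<rho> x = plus_e3 n x then 1 else 0)"
      using x ne by (cases rule: rho_cases[OF x]) auto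
  qed
  then show ?thesis
    by (simp add: sum.distrib count_if fin cntA_def cntB_def cntC_def E_def)
qed

lemma AC_W: "2 * cntA n \<rho> + cntC n \<rho> = 2 * n * card Wr"
proof -
  have bij: "bij_betw \<rho> (Mn n) (Mn n)" using perm by (rule permutes_imp_bij)
  have s1: "(\<Sum>x\<in>Mn n. pos (\<rho> x)) = (\<Sum>x\<in>Mn n. pos x)"
    using sum.reindex_bij_betw[OF bij, of pos] by simp
  have "(\<Sum>x\<in>Mn n. pos (\<rho> x) + (if wrap x then 2 * n else 0)) = (\<Sum>x\<in>Mn n. pos x + delta x)"
    using pos_step by (rule sum.cong[OF refl])
  then have "(\<Sum>x\<in>Mn n. pos (\<rho> x)) + (\<Sum>x\<in>Mn n. (if wrap x then 2 * n else 0)) =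
             (\<Sum>x\<in>Mn n. pos x) + (\<Sum>x\<in>Mn n. delta x)"
    by (simp add: sum.distrib)
  then have eq: "(\<Sum>x\<in>Mn n. (if wrap x then 2 * n else 0)) = (\<Sum>x\<in>Mn n. delta x)"
    using s1 by simp
  have l: "(\<Sum>x\<in>Mn n. (if wrap x then 2 * n else 0)) = 2 * n * card Wr"
  proof -
    have "(\<Sum>x\<in>Mn n. (if wrap x then 2 * n else 0)) = (\<Sum>x\<in>Mn n. 2 * n * (if wrap x then 1 else 0))"
      by (rule sum.cong) auto
    also have "\<dots> = 2 * n * card Wr" by (simp add: sum_distrib_left[symmetric] count_if fin Wr_def)
    finally show ?thesis .
  qed
  have r: "(\<Sum>x\<in>Mn n. delta x) = 2 * cntA n \<rho> + cntC n \<rho>"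
  proof -
    have "(\<Sum>x\<in>Mn n. delta x) = (\<Sum>x\<in>Mn n. 2 * (if \<rho> x = plus_e1 n x then 1 else 0) + (if \<rho> x = plus_e3 n x then 1 else 0))"
    proof (rule sum.cong[OF refl])
      fix x assume x: "x \<in> Mn n"
      show "delta x = 2 * (if \<rho> x = plus_e1 n x then 1 else 0) + (if \<rho> x = plus_e3 n x then 1 else 0)"
        using ne_x[OF x] unfolding delta_def by auto
    qed
    also have "\<dots> = 2 * cntA n \<rho> + cntC n \<rho>"
      by (simp add: sum.distrib sum_distrib_left[symmetric] count_if fin cntA_def cntC_def)
    finally show ?thesis .
  qed
  show ?thesis using eq l r by simp
qed

end

lemma modpred_add: "(j::nat) < n \<Longrightarrow> (a + 1 + (j + n - 1) mod n) mod n = (a + j) mod n"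
proof (cases j)
  case 0
  assume "j < n"
  then have "(j + n - 1) mod n = n - 1" using 0 by simp
  moreover have "a + 1 + (n - 1) = a + n" using \<open>j < n\<close> by simp
  ultimately show ?thesis using 0 by simp
next
  case (Suc k)
  assume "j < n"
  then have "(j + n - 1) mod n = k" using Suc by (simp add: modpred)
  then show ?thesis using Suc by simp
qed

lemma modpred_ne: "(j::nat) < n \<Longrightarrow> n \<ge> 2 \<Longrightarrow> (j + n - 1) mod n \<noteq> j"
  by (cases j) (auto simp: modpred)

lemma modpred_lt: "0 < (n::nat) \<Longrightarrow> (j + n - 1) mod n < n"
  by simp

context gsl
begin

definition I where "I = invs (key n) E \<rho>"
definition Isame where "Isame = {z \<in> I. lay n (fst z) = lay n (snd z)}"
definition Icr where "Icr = {z \<in> I. lay n (fst z) \<noteq> lay n (snd z)}"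

lemma EMn: "x \<in> E \<Longrightarrow> x \<in> Mn n" by (simp add: E_def)
lemma Erho: "x \<in> E \<Longrightarrow> \<rho> x \<in> E" using permutes_in_image[OF permE] by simp
lemma Ene: "x \<in> E \<Longrightarrow> \<rho> x \<noteq> x" by (simp add: E_def)
lemma Elay: "x \<in> E \<Longrightarrow> lay n (\<rho> x) = (lay n x + 1) mod n" using lay_step by (simp add: E_def)

lemma I_iff: "(x,y) \<in> I \<longleftrightarrow> x \<in> E \<and> y \<in> E \<and> key n x < key n y \<and> key n (\<rho> y) < key n (\<rho> x)"
  by (simp add: I_def invs_def)

lemma Isame_iff:
  "(x,y) \<in> Isame \<longleftrightarrow> x \<in> E \<and> y \<in> E \<and> lay n x = lay n y \<and> pos x < pos y \<and> pos (\<rho> y) < pos (\<rho> x)"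
proof (cases "x \<in> E \<and> y \<in> E \<and> lay n x = lay n y")
  case True
  then have m: "x \<in> Mn n" "y \<in> Mn n" "\<rho> x \<in> Mn n" "\<rho> y \<in> Mn n" using EMn Erho by auto
  have "lay n (\<rho> x) = lay n (\<rho> y)" using True Elay by simp
  then show ?thesis using True key_less[OF m(1,2)] key_less[OF m(4,3)] by (auto simp: Isame_def I_iff)
qed (auto simp: Isame_def I_iff)

lemma I_split: "card I = card Isame + card Icr"
proof -
  have "I = Isame \<union> Icr" "Isame \<inter> Icr = {}" by (auto simp: Isame_def Icr_def)
  moreover have "finite I"
    by (rule finite_subset[of _ "E \<times> E"]) (auto simp: I_def invs_def finE)
  ultimately show ?thesis by (simp add: card_Un_disjoint)
qed

lemma n1_lay: "(n - 1 + 1) mod n = 0" using n2 by simp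

lemma Icr_eq: "Icr = (E - Ed (n - 1)) \<times> Ed (n - 1)"
proof (rule set_eqI)
  fix z :: "medge \<times> medge"
  obtain x y where z: "z = (x,y)" by (cases z)
  show "z \<in> Icr \<longleftrightarrow> z \<in> (E - Ed (n - 1)) \<times> Ed (n - 1)"
  proof (cases "x \<in> E \<and> y \<in> E")
    case True
    then have m: "x \<in> Mn n" "y \<in> Mn n" "\<rho> x \<in> Mn n" "\<rho> y \<in> Mn n" using EMn Erho by auto
    have lx: "lay n x < n" "lay n y < n" using lay_lt by auto
    have rx: "lay n (\<rho> x) = (lay n x + 1) mod n" "lay n (\<rho> y) = (lay n y + 1) mod n"
      using True Elay by auto
    show ?thesis
    proof
      assume "z \<in> Icr"
      then have a: "lay n x \<noteq> lay n y" "key n x < key n y" "key n (\<rho> y) < key n (\<rho> x)"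
        using z by (auto simp: Icr_def I_iff)
      then have b: "lay n x < lay n y" using key_less[OF m(1,2)] by auto
      have c: "lay n (\<rho> y) \<le> lay n (\<rho> x)" using a key_less[OF m(4,3)] by auto
      have "lay n y = n - 1"
      proof (rule ccontr)
        assume "lay n y \<noteq> n - 1"
        then have "lay n y + 1 < n" using lx by auto
        then have "lay n (\<rho> y) = lay n y + 1" "lay n (\<rho> x) = lay n x + 1" using rx b by auto
        then show False using b c by simp
      qed
      then show "z \<in> (E - Ed (n - 1)) \<times> Ed (n - 1)" using z True b by (auto simp: Ed_def)
    next
      assume "z \<in> (E - Ed (n - 1)) \<times> Ed (n - 1)"
      then have a: "lay n y = n - 1" "lay n x \<noteq> n - 1" using z by (auto simp: Ed_def)
      then have b: "lay n x < lay n y" using lx by auto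
      have "lay n (\<rho> y) = 0" using rx a n1_lay by simp
      moreover have "lay n (\<rho> x) = lay n x + 1" using rx a lx by auto
      ultimately have "key n (\<rho> y) < key n (\<rho> x)" using key_less[OF m(4,3)] by simp
      moreover have "key n x < key n y" using key_less[OF m(1,2)] b by simp
      ultimately show "z \<in> Icr" using z True a b by (auto simp: Icr_def I_iff)
    qed
  qed (auto simp: z Icr_def I_iff Ed_def)
qed

lemma card_Icr: "card Icr = (card E - m) * m"
proof -
  have "Ed (n - 1) \<subseteq> E" by (auto simp: Ed_def)
  moreover have "card (Ed (n - 1)) = m" using card_Ed n2 by simp
  ultimately have "card (E - Ed (n - 1)) = card E - m" by (simp add: card_Diff_subset finite_subset[OF _ finE])
  then show ?thesis unfolding Icr_eq card_cartesian_product using \<open>card (Ed (n - 1)) = m\<close> by simp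
qed

end

context gsl
begin

definition Cr where "Cr = {(i,j) \<in> {0..<n} \<times> {0..<n}.
      \<rho> (True, (i + n - 1) mod n, j) = (True, i, j) \<and>
      \<rho> (False, i, (j + n - 1) mod n) = (False, i, j)}"
definition Cr0 where "Cr0 = {v \<in> Cr. fst v = 0}"
definition Cr1 where "Cr1 = {v \<in> Cr. fst v \<noteq> 0}"
definition P1 where "P1 = {z \<in> Isame. \<not> wrap (snd z)}"
definition P2 where "P2 = {z \<in> Isame. wrap (snd z)}"
definition gmap where "gmap v = ((True, (fst v + n - 1) mod n, snd v), (False, fst v, (snd v + n - 1) mod n))"
definition qmap where "qmap v = ((False, 0::nat, (snd v + n - 1) mod n), (True, n - 1, snd v))"
definition Q where "Q = qmap ` Cr0"
definition R where "R = {(x,y). y \<in> Wr \<and> x \<in> E \<and> lay n x = lay n y \<and> x \<noteq> y}"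

lemma crossings_split: "crossings n \<rho> = card Cr0 + card Cr1"
proof -
  have fin: "finite Cr" unfolding Cr_def by (rule finite_subset[of _ "{0..<n} \<times> {0..<n}"]) auto
  have "Cr = Cr0 \<union> Cr1" "Cr0 \<inter> Cr1 = {}" by (auto simp: Cr0_def Cr1_def)
  moreover have "crossings n \<rho> = card Cr" by (simp add: crossings_def Cr_def)
  ultimately show ?thesis using fin by (simp add: card_Un_disjoint)
qed

lemma wrap_pos: "x \<in> Mn n \<Longrightarrow> wrap x \<Longrightarrow> pos x = 2 * n - 1"
  by (cases x) (auto simp: wrap_def pos_def Mn_iff)

lemma pos_nowrap: "x \<in> Mn n \<Longrightarrow> \<not> wrap x \<Longrightarrow> pos (\<rho> x) = pos x + delta x"
  using pos_step[of x] by simp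

lemma delta_le: "delta x \<le> 2" by (simp add: delta_def)

lemma delta2:
  assumes "x \<in> E" "delta x = 2"
  shows "fst x" "\<rho> x = plus_e1 n x"
proof -
  have x: "x \<in> Mn n" using assms EMn by auto
  have e: "\<rho> x = plus_e1 n x" using assms(2) by (auto simp: delta_def split: if_splits)
  then show "\<rho> x = plus_e1 n x" .
  show "fst x" using e ne_x[OF x] Ene[OF assms(1)] by (cases rule: rho_cases[OF x]) auto
qed

lemma delta0:
  assumes "x \<in> E" "delta x = 0"
  shows "\<not> fst x" "\<rho> x = plus_e2 n x"
proof -
  have x: "x \<in> Mn n" using assms EMn by auto
  have "\<rho> x \<noteq> plus_e1 n x" "\<rho> x \<noteq> plus_e3 n x" using assms(2) by (auto simp: delta_def split: if_splits)
  then show "\<not> fst x" "\<rho> x = plus_e2 n x" using Ene[OF assms(1)] by (cases rule: rho_cases[OF x]; auto)+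
qed

lemma P1_eq: "P1 = gmap ` Cr1"
proof
  show "P1 \<subseteq> gmap ` Cr1"
  proof
    fix z assume z: "z \<in> P1"
    obtain x y where xy: "z = (x,y)" by (cases z)
    have A: "x \<in> E" "y \<in> E" "lay n x = lay n y" "pos x < pos y" "pos (\<rho> y) < pos (\<rho> x)" "\<not> wrap y"
      using z xy by (auto simp: P1_def Isame_iff)
    have mx: "x \<in> Mn n" and my: "y \<in> Mn n" using A EMn by auto
    have nwx: "\<not> wrap x" using wrap_pos[OF mx] pos_lt[OF my] A by auto
    have px: "pos (\<rho> x) = pos x + delta x" using pos_nowrap[OF mx nwx] .
    have py: "pos (\<rho> y) = pos y + delta y" using pos_nowrap[OF my A(6)] .
    have d: "delta x = 2" "delta y = 0" "pos y = pos x + 1"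
      using px py A delta_le[of x] delta_le[of y] by linarith+
    note dx = delta2[OF A(1) d(1)] and dy = delta0[OF A(2) d(2)]
    obtain i j where x: "x = (True, i, j)" using dx(1) by (cases x) auto
    obtain i' j' where y: "y = (False, i', j')" using dy(1) by (cases y) auto
    have ij: "i < n" "j < n" "i' < n" "j' < n" using mx my x y by (auto simp: Mn_iff)
    have ii: "i' = i + 1" using d(3) x y by (simp add: pos_def)
    have lay: "(i + j) mod n = (i + 1 + j') mod n" using A(3) x y ii by (simp add: lay_def)
    have jj: "j' = (j + n - 1) mod n"
    proof -
      have "(i + 1 + (j + n - 1) mod n) mod n = (i + 1 + j') mod n"
        using modpred_add[OF ij(2), of i] lay by simp
      then show ?thesis using mod_cancel_helper[of "i + 1" "(j + n - 1) mod n" n j'] ij n2 by simp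
    qed
    have rx: "\<rho> (True, i, j) = (True, i + 1, j)" using dx(2) x ij ii by simp
    have "((j + n - 1) mod n + 1) mod n = j" using modpred_add[OF ij(2), of 0] ij by simp
    then have ry: "\<rho> (False, i + 1, (j + n - 1) mod n) = (False, i + 1, j)"
      using dy(2) y ii jj by simp
    have v: "(i + 1, j) \<in> Cr1" using rx ry ij ii by (simp add: Cr1_def Cr_def)
    have "z = gmap (i + 1, j)" using xy x y ii jj ij by (simp add: gmap_def)
    then show "z \<in> gmap ` Cr1" using v by blast
  qed
  show "gmap ` Cr1 \<subseteq> P1"
  proof
    fix z assume "z \<in> gmap ` Cr1"
    then obtain i j where v: "(i,j) \<in> Cr1" "z = gmap (i,j)" by auto
    have ij: "i < n" "j < n" "i \<noteq> 0" using v by (auto simp: Cr1_def Cr_def)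
    have im: "(i + n - 1) mod n = i - 1" using modpred[OF ij(1)] ij(3) by simp
    have rx: "\<rho> (True, i - 1, j) = (True, i, j)" and ry: "\<rho> (False, i, (j + n - 1) mod n) = (False, i, j)"
      using v im by (auto simp: Cr1_def Cr_def)
    have z: "z = ((True, i - 1, j), (False, i, (j + n - 1) mod n))" using v im by (simp add: gmap_def)
    have jne: "(j + n - 1) mod n \<noteq> j" using modpred_ne ij n2 by simp
    have xE: "(True, i - 1, j) \<in> E" using rx ij by (auto simp: E_def Mn_iff)
    have yE: "(False, i, (j + n - 1) mod n) \<in> E" using ry ij jne n2 by (auto simp: E_def Mn_iff)
    have lay: "lay n (True, i - 1, j) = lay n (False, i, (j + n - 1) mod n)"
      using modpred_add[OF ij(2), of "i - 1"] ij by (simp add: lay_def)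
    have "z \<in> Isame" unfolding z Isame_iff using xE yE lay rx ry ij by (auto simp: pos_def)
    moreover have "\<not> wrap (snd z)" using z by (simp add: wrap_def)
    ultimately show "z \<in> P1" by (simp add: P1_def)
  qed
qed

lemma card_P1: "card P1 = card Cr1"
proof -
  have "inj_on gmap Cr1" by (auto simp: inj_on_def gmap_def)
  then show ?thesis unfolding P1_eq by (rule card_image)
qed

lemma card_Q: "card Q = card Cr0"
proof -
  have "inj_on qmap Cr0" by (auto simp: inj_on_def qmap_def Cr0_def)
  then show ?thesis unfolding Q_def by (rule card_image)
qed

end

context gsl
begin

lemma Wr_E: "Wr \<subseteq> E" by (auto simp: Wr_def wrap_def E_def)

lemma P2_R: "P2 \<subseteq> R"
proof
  fix z assume z: "z \<in> P2"
  obtain x y where xy: "z = (x,y)" by (cases z)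
  then show "z \<in> R" using z EMn by (auto simp: P2_def Isame_iff R_def Wr_def)
qed

lemma Q_R: "Q \<subseteq> R"
proof
  fix z assume "z \<in> Q"
  then obtain i j where v: "(i,j) \<in> Cr0" "z = qmap (i,j)" by (auto simp: Q_def)
  have ij: "i = 0" "j < n" using v by (auto simp: Cr0_def Cr_def)
  have n1: "(0 + n - 1) mod n = n - 1" using n2 by simp
  have ry: "\<rho> (True, n - 1, j) = (True, 0, j)" and rx: "\<rho> (False, 0, (j + n - 1) mod n) = (False, 0, j)"
    using v ij n1 by (auto simp: Cr0_def Cr_def)
  have jne: "(j + n - 1) mod n \<noteq> j" using modpred_ne ij n2 by simp
  have yW: "(True, n - 1, j) \<in> Wr" using ry n2 ij by (auto simp: Wr_def wrap_def Mn_iff)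
  have xE: "(False, 0, (j + n - 1) mod n) \<in> E" using rx jne n2 ij by (auto simp: E_def Mn_iff)
  have lay: "lay n (False, 0, (j + n - 1) mod n) = lay n (True, n - 1, j)"
    using n2 by (simp add: lay_def add.commute)
  show "z \<in> R" using v yW xE lay by (simp add: R_def qmap_def)
qed

lemma P2_Q: "P2 \<inter> Q = {}"
proof -
  have "z \<notin> P2" if zQ: "z \<in> Q" for z
  proof -
    obtain i j where v: "(i,j) \<in> Cr0" "z = qmap (i,j)" using zQ by (auto simp: Q_def)
    have ij: "i = 0" "j < n" using v by (auto simp: Cr0_def Cr_def)
    have n1: "(0 + n - 1) mod n = n - 1" using n2 by simp
    have ry: "\<rho> (True, n - 1, j) = (True, 0, j)" and rx: "\<rho> (False, 0, (j + n - 1) mod n) = (False, 0, j)"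
      using v ij n1 by (auto simp: Cr0_def Cr_def)
    show ?thesis using v rx ry by (simp add: P2_def Isame_iff qmap_def pos_def)
  qed
  then show ?thesis by blast
qed

lemma R_sub: "R \<subseteq> P2 \<union> Q"
proof
  fix z assume z: "z \<in> R"
  obtain x y where xy: "z = (x,y)" by (cases z)
  have A: "y \<in> Wr" "x \<in> E" "lay n x = lay n y" "x \<noteq> y" using z xy by (auto simp: R_def)
  have yE: "y \<in> E" using A Wr_E by auto
  have mx: "x \<in> Mn n" and my: "y \<in> Mn n" using A yE EMn by auto
  have wy: "wrap y" using A by (simp add: Wr_def)
  obtain j where y: "y = (True, n - 1, j)" using wy by (cases y) (auto simp: wrap_def)
  have j: "j < n" using my y by (simp add: Mn_iff)
  have py: "pos y = 2 * n - 1" using wrap_pos[OF my wy] .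
  have pxy: "pos x \<noteq> pos y" using same_layer_inj[OF mx my A(3)] A(4) by auto
  have pxlt: "pos x < pos y" using pxy py pos_lt[OF mx] by auto
  have nwx: "\<not> wrap x" using wrap_pos[OF mx] pxy py by auto
  have px: "pos (\<rho> x) = pos x + delta x" using pos_nowrap[OF mx nwx] .
  have n1: "(n - 1 + 1) mod n = 0" using n2 by simp
  have ry: "\<rho> y = (True, 0, j) \<or> \<rho> y = (False, 0, j)"
    using Ene[OF yE] n1 n2 by (cases rule: rho_cases[OF my]) (auto simp: y)
  have lr: "lay n (\<rho> x) = lay n (\<rho> y)" using Elay A(2) yE A(3) by simp
  have rne: "\<rho> x \<noteq> \<rho> y" using A(4) rho_inj by simp
  have prne: "pos (\<rho> x) \<noteq> pos (\<rho> y)"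
    using same_layer_inj[OF in_Mn_rho[OF mx] in_Mn_rho[OF my] lr] rne by auto
  show "z \<in> P2 \<union> Q"
  proof (cases "pos (\<rho> y) < pos (\<rho> x)")
    case True
    then have "z \<in> Isame" using xy A yE pxlt by (simp add: Isame_iff)
    then show ?thesis using wy xy by (simp add: P2_def)
  next
    case False
    then have "pos (\<rho> x) < pos (\<rho> y)" using prne by simp
    moreover have "pos (\<rho> y) \<le> 1" using ry by (auto simp: pos_def)
    ultimately have a: "pos (\<rho> x) = 0" "pos (\<rho> y) = 1" by auto
    then have ry1: "\<rho> y = (True, 0, j)" using ry by (auto simp: pos_def)
    have b: "pos x = 0" "delta x = 0" using a px by auto
    note d0 = delta0[OF A(2) b(2)]
    obtain j' where x: "x = (False, 0, j')" using b(1) d0(1) by (cases x) (auto simp: pos_def)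
    have j': "j' < n" using mx x by (simp add: Mn_iff)
    have "j' mod n = (n - 1 + j) mod n" using A(3) x y by (simp add: lay_def)
    then have jj: "j' = (j + n - 1) mod n" using j' n2 by (simp add: add.commute)
    have "((j + n - 1) mod n + 1) mod n = j" using modpred_add[OF j, of 0] j by simp
    then have rx: "\<rho> (False, 0, (j + n - 1) mod n) = (False, 0, j)" using d0(2) x jj by simp
    have n1': "(0 + n - 1) mod n = n - 1" using n2 by simp
    have v: "(0, j) \<in> Cr0" using rx ry1 y j n1' n2 by (simp add: Cr0_def Cr_def)
    have "z = qmap (0, j)" using xy x y jj by (simp add: qmap_def)
    then show ?thesis using v by (auto simp: Q_def)
  qed
qed

lemma R_eq: "R = P2 \<union> Q" using R_sub P2_R Q_R by blast

lemma card_R: "card R = card Wr * (m - 1)"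
proof -
  have "R = (\<lambda>(y,x). (x,y)) ` (SIGMA y:Wr. Ed (lay n y) - {y})"
    by (auto simp: R_def Ed_def Wr_def E_def image_iff)
  moreover have "inj_on (\<lambda>(y,x). (x,y)) (SIGMA y:Wr. Ed (lay n y) - {y})" by (auto simp: inj_on_def)
  ultimately have "card R = card (SIGMA y:Wr. Ed (lay n y) - {y})" by (simp add: card_image)
  also have "\<dots> = (\<Sum>y\<in>Wr. card (Ed (lay n y) - {y}))"
    by (rule card_SigmaI) (auto simp: Wr_def fin Ed_def finE)
  also have "\<dots> = (\<Sum>y\<in>Wr. m - 1)"
  proof (rule sum.cong[OF refl])
    fix y assume "y \<in> Wr"
    then have "y \<in> Ed (lay n y)" using Wr_E by (auto simp: Ed_def)
    moreover have "finite (Ed (lay n y))" using finE by (simp add: Ed_def)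
    ultimately show "card (Ed (lay n y) - {y}) = m - 1" using card_Ed[OF lay_lt] by simp
  qed
  finally show ?thesis by simp
qed

lemma finR: "finite R"
  by (rule finite_subset[of _ "E \<times> E"]) (use Wr_E finE in \<open>auto simp: R_def\<close>)

lemma card_P2: "card P2 + card Cr0 = card Wr * (m - 1)"
proof -
  have "finite P2" "finite Q" using finR P2_R Q_R finite_subset by blast+
  then have "card R = card P2 + card Q" using R_eq P2_Q by (simp add: card_Un_disjoint)
  then show ?thesis using card_R card_Q by simp
qed

lemma card_Isame: "card Isame = card Cr1 + card P2"
proof -
  have fin: "finite Isame"
    by (rule finite_subset[of _ "E \<times> E"]) (auto simp: Isame_def I_def invs_def finE)
  have "Isame = P1 \<union> P2" "P1 \<inter> P2 = {}" by (auto simp: P1_def P2_def)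
  moreover have "finite P1" "finite P2" using fin by (auto simp: P1_def P2_def)
  ultimately show ?thesis using card_P1 by (simp add: card_Un_disjoint)
qed

lemma sign_formula: "sign \<rho> = (-1::int) ^ (card Cr1 + card P2 + (card E - m) * m)"
proof -
  have "sign \<rho> = (-1::int) ^ card I"
    unfolding I_def by (rule sign_invs[OF finE inj_on_subset[OF key_inj E_sub] permE])
  then show ?thesis using I_split card_Isame card_Icr by simp
qed

end

lemma m1pow: "(-1::complex) ^ k = (if even k then 1 else -1)"
  by (simp add: minus_one_power_iff)

lemma arf:
  fixes n W k :: nat
  shows "(\<Sum>\<theta>\<in>{0,1} \<times> {0,1}. Cth n \<theta> * (-1) ^ (fst \<theta> * W + snd \<theta> * k))
       = (-1::complex) ^ ((W + n + 1) * (k + n + 1) + n + 1)"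
proof -
  have s: "{0,1} \<times> {0,1} = {(0,0),(0,1),(1,0),(1,1::nat)}" by auto
  show ?thesis unfolding s Cth_def
    by (cases "even n"; cases "even W"; cases "even k") (simp_all add: m1pow)
qed

lemma par:
  fixes S0 S1 p2 W k m' n' :: nat
  assumes "p2 + S0 = W * m'" "Suc m' = W + k"
  shows "even (S1 + p2 + (Suc n' * Suc m') * Suc m') \<longleftrightarrow>
         even (S0 + S1 + ((W + Suc (Suc n') + 1) * (k + Suc (Suc n') + 1) + Suc (Suc n') + 1))"
proof -
  have e1: "even p2 \<longleftrightarrow> (even S0 \<longleftrightarrow> even (W * m'))"
    using assms(1) by (metis even_add)
  have e2: "even m' \<longleftrightarrow> \<not> (even W \<longleftrightarrow> even k)"
    using assms(2) by (metis even_add even_Suc)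
  show ?thesis using e1 e2
    by (cases "even W"; cases "even k"; cases "even n'"; cases "even S0"; cases "even S1"; cases "even m'") auto
qed

lemma prod_if_pow: "finite A \<Longrightarrow> (\<Prod>x\<in>A. if P x then (a::complex) else 1) = a ^ card {x\<in>A. P x}"
  by (simp add: prod.inter_filter[symmetric])

lemma phase:
  fixes A B C W k n t1 t2 :: nat and \<alpha> \<beta> \<gamma> :: real
  assumes n: "n > 0" and h2: "2 * A + C = 2 * n * W" and h3: "2 * B + C = 2 * n * k"
  shows "(complex_of_real \<alpha> * exp (complex_of_real pi * \<i> * of_nat t1 / of_nat n)) ^ A *
         (complex_of_real \<beta> * exp (complex_of_real pi * \<i> * of_nat t2 / of_nat n)) ^ B *
         (complex_of_real \<gamma> * exp (complex_of_real pi * \<i> * of_nat (t1 + t2) / (2 * of_nat n))) ^ C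
       = complex_of_real \<alpha> ^ A * complex_of_real \<beta> ^ B * complex_of_real \<gamma> ^ C * (-1) ^ (t1 * W + t2 * k)"
proof -
  define z where "z = complex_of_real pi * \<i>"
  have H2: "2 * of_nat A + of_nat C = (2 * of_nat n * of_nat W :: complex)"
    using arg_cong[OF h2, of "of_nat :: nat \<Rightarrow> complex"] by simp
  have H3: "2 * of_nat B + of_nat C = (2 * of_nat n * of_nat k :: complex)"
    using arg_cong[OF h3, of "of_nat :: nat \<Rightarrow> complex"] by simp
  have nz: "(of_nat n :: complex) \<noteq> 0" using n by simp
  have sum: "of_nat A * (z * of_nat t1 / of_nat n) + of_nat B * (z * of_nat t2 / of_nat n)
        + of_nat C * (z * of_nat (t1 + t2) / (2 * of_nat n)) = of_nat (t1 * W + t2 * k) * z"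
  proof -
    have "of_nat A * (z * of_nat t1 / of_nat n) + of_nat B * (z * of_nat t2 / of_nat n)
        + of_nat C * (z * of_nat (t1 + t2) / (2 * of_nat n))
        = z * (of_nat t1 * (2 * of_nat A + of_nat C) + of_nat t2 * (2 * of_nat B + of_nat C)) / (2 * of_nat n)"
      using nz by (simp add: field_simps)
    also have "\<dots> = z * (of_nat t1 * (2 * of_nat n * of_nat W) + of_nat t2 * (2 * of_nat n * of_nat k)) / (2 * of_nat n)"
      unfolding H2 H3 ..
    also have "\<dots> = of_nat (t1 * W + t2 * k) * z" using nz by (simp add: field_simps)
    finally show ?thesis .
  qed
  have gen: "(a*b)^A * (c*d)^B * (e*f)^C = (a^A*c^B*e^C) * (b^A*d^B*f^C)" for a b c d e f :: complex
    by (simp add: power_mult_distrib mult_ac)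
  have "(complex_of_real \<alpha> * exp (z * of_nat t1 / of_nat n)) ^ A *
         (complex_of_real \<beta> * exp (z * of_nat t2 / of_nat n)) ^ B *
         (complex_of_real \<gamma> * exp (z * of_nat (t1 + t2) / (2 * of_nat n))) ^ C
       = complex_of_real \<alpha> ^ A * complex_of_real \<beta> ^ B * complex_of_real \<gamma> ^ C *
         (exp (of_nat A * (z * of_nat t1 / of_nat n)) * exp (of_nat B * (z * of_nat t2 / of_nat n))
         * exp (of_nat C * (z * of_nat (t1 + t2) / (2 * of_nat n))))"
    unfolding gen exp_of_nat_mult ..
  also have "exp (of_nat A * (z * of_nat t1 / of_nat n)) * exp (of_nat B * (z * of_nat t2 / of_nat n))
         * exp (of_nat C * (z * of_nat (t1 + t2) / (2 * of_nat n))) = exp (of_nat (t1 * W + t2 * k) * z)"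
    unfolding sum[symmetric] by (simp add: exp_add)
  also have "\<dots> = (-1) ^ (t1 * W + t2 * k)" unfolding exp_of_nat_mult z_def by simp
  finally show ?thesis unfolding z_def .
qed

context gsl
begin

lemma Kth_eq:
  assumes x: "x \<in> Mn n"
  shows "Kth \<alpha> \<beta> \<gamma> n \<theta> x (\<rho> x) =
    (if \<rho> x = plus_e1 n x then complex_of_real \<alpha> * exp (complex_of_real pi * \<i> * of_nat (fst \<theta>) / of_nat n) else 1) *
    (if \<rho> x = plus_e2 n x then complex_of_real \<beta> * exp (complex_of_real pi * \<i> * of_nat (snd \<theta>) / of_nat n) else 1) *
    (if \<rho> x = plus_e3 n x then complex_of_real \<gamma> * exp (complex_of_real pi * \<i> * of_nat (fst \<theta> + snd \<theta>) / (2 * of_nat n)) else 1)"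
proof -
  note ne = ne_x[OF x]
  have ne2: "plus_e2 n x \<noteq> plus_e1 n x" "plus_e3 n x \<noteq> plus_e1 n x" "plus_e3 n x \<noteq> plus_e2 n x"
    "x \<noteq> plus_e1 n x" "x \<noteq> plus_e2 n x" "x \<noteq> plus_e3 n x"
    using ne by metis+
  show ?thesis using ne ne2
    by (cases rule: rho_cases[OF x]) (simp_all add: Kth_def is_black_def)
qed

lemma Kprod:
  "(\<Prod>x\<in>Mn n. Kth \<alpha> \<beta> \<gamma> n \<theta> x (\<rho> x)) =
    (complex_of_real \<alpha> * exp (complex_of_real pi * \<i> * of_nat (fst \<theta>) / of_nat n)) ^ cntA n \<rho> *
    (complex_of_real \<beta> * exp (complex_of_real pi * \<i> * of_nat (snd \<theta>) / of_nat n)) ^ cntB n \<rho> *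
    (complex_of_real \<gamma> * exp (complex_of_real pi * \<i> * of_nat (fst \<theta> + snd \<theta>) / (2 * of_nat n))) ^ cntC n \<rho>"
  by (simp add: Kth_eq prod.distrib prod_if_pow fin cntA_def cntB_def cntC_def cong: prod.cong)

end

lemma par2:
  fixes S0 S1 p2 W k m n e :: nat
  assumes "p2 + S0 = W * (m - 1)" "m = W + k" "n \<ge> 2" "e = n * m"
  shows "even (S1 + p2 + (e - m) * m) \<longleftrightarrow> even (S0 + S1 + ((W + n + 1) * (k + n + 1) + n + 1))"
proof -
  obtain n' where n: "n = Suc (Suc n')" using assms(3) by (metis add_2_eq_Suc le_Suc_ex)
  show ?thesis
  proof (cases m)
    case 0
    then have "W = 0" "k = 0" "p2 = 0" "S0 = 0" using assms by auto
    then show ?thesis using 0 n by simp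
  next
    case (Suc m')
    have emq: "e - m = Suc n' * Suc m'" using assms(4) Suc n by simp
    have a1: "p2 + S0 = W * m'" using assms(1) Suc by simp
    have a2: "Suc m' = W + k" using assms(2) Suc by simp
    show ?thesis unfolding emq unfolding Suc n by (rule par[OF a1 a2])
  qed
qed

theorem lemma3p3:
  fixes \<alpha> \<beta> \<gamma> :: real and n :: nat and \<rho> :: "medge \<Rightarrow> medge"
  assumes "\<alpha> > 0" and "\<beta> > 0" and "\<gamma> > 0" and "n \<ge> 2"
    and "\<rho> \<in> GS n"
  shows "complex_of_real (weight \<alpha> \<beta> \<gamma> n \<rho>) =
    of_int (sign \<rho>) *
      (\<Sum>\<theta> \<in> {0,1} \<times> {0,1}. Cth n \<theta> * (\<Prod>x \<in> Mn n. Kth \<alpha> \<beta> \<gamma> n \<theta> x (\<rho> x)))"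
proof -
  interpret gsl n \<rho> using assms(4,5) by unfold_locales
  define A B C where "A = cntA n \<rho>" and "B = cntB n \<rho>" and "C = cntC n \<rho>"
  define W where "W = card Wr"
  define k where "k = m - W"
  have n0: "n > 0" using n2 by simp
  have h1: "A + B + C = n * m" using card_E_ABC card_E by (simp add: A_def B_def C_def)
  have h2: "2 * A + C = 2 * n * W" using AC_W by (simp add: A_def C_def W_def)
  have "2 * n * W \<le> 2 * n * m" using h1 h2 by linarith
  then have Wle: "W \<le> m" using n0 by simp
  have h3: "2 * B + C = 2 * n * k"
  proof -
    have "2 * B + C = 2 * (n * m) - 2 * n * W" using h1 h2 by linarith
    also have "\<dots> = 2 * n * (m - W)" by (simp add: diff_mult_distrib2)
    finally show ?thesis by (simp add: k_def)
  qed
  define KK where "KK = complex_of_real \<alpha> ^ A * complex_of_real \<beta> ^ B * complex_of_real \<gamma> ^ C"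
  have K: "(\<Prod>x \<in> Mn n. Kth \<alpha> \<beta> \<gamma> n \<theta> x (\<rho> x)) = KK * (-1) ^ (fst \<theta> * W + snd \<theta> * k)" for \<theta>
    unfolding Kprod KK_def A_def[symmetric] B_def[symmetric] C_def[symmetric]
    by (rule phase[OF n0 h2 h3])
  define Phi where "Phi = (W + n + 1) * (k + n + 1) + n + 1"
  have sumeq: "(\<Sum>\<theta> \<in> {0,1} \<times> {0,1}. Cth n \<theta> * (\<Prod>x \<in> Mn n. Kth \<alpha> \<beta> \<gamma> n \<theta> x (\<rho> x)))
      = KK * (-1) ^ Phi"
  proof -
    have "(\<Sum>\<theta> \<in> {0,1} \<times> {0,1}. Cth n \<theta> * (\<Prod>x \<in> Mn n. Kth \<alpha> \<beta> \<gamma> n \<theta> x (\<rho> x)))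
        = KK * (\<Sum>\<theta> \<in> {0,1} \<times> {0,1}. Cth n \<theta> * (-1) ^ (fst \<theta> * W + snd \<theta> * k))"
      unfolding K sum_distrib_left by (intro sum.cong refl) (simp add: mult_ac)
    then show ?thesis unfolding arf Phi_def .
  qed
  define T where "T = card Cr1 + card P2 + (card E - m) * m"
  have sg: "sign \<rho> = (-1) ^ T" using sign_formula by (simp add: T_def)
  have S: "crossings n \<rho> = card Cr0 + card Cr1" by (rule crossings_split)
  have pe: "even T \<longleftrightarrow> even (card Cr0 + card Cr1 + Phi)"
    unfolding T_def Phi_def
    by (rule par2[OF card_P2[folded W_def]]) (use Wle n2 card_E in \<open>auto simp: k_def\<close>)
  have w: "complex_of_real (weight \<alpha> \<beta> \<gamma> n \<rho>) = (-1) ^ (card Cr0 + card Cr1) * KK"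
    unfolding weight_def KK_def A_def B_def C_def S by simp
  have "(-1::complex) ^ (card Cr0 + card Cr1) = (-1) ^ T * (-1) ^ Phi"
    using pe by (simp add: m1pow power_add[symmetric] del: power_add)
  then show ?thesis unfolding w sumeq sg by simp
qed

end
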